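(* Let $S$ be a nonempty compact (not necessarily convex) set in the plane and fix $0<\alpha<\pi$. Then there exist a point $O$ and two rays $q,r$ emanating from $O$ forming an angle $\alpha$ such that $S$ is contained in the closed convex wedge bounded by $q$ and $r$, $q$ meets the convex hull of $S$ in exactly one point $X$, $r$ meets the convex hull of $S$ in exactly one point $Y$, $X,Y\in S$, and $|OX|=|OY|$. *)

theory Defs
  imports "HOL-Analysis.Analysis"
begin

definition ray :: "real^2 \<Rightarrow> real^2 \<Rightarrow> (real^2) set" where
  "ray P u = {P + t *\<^sub>R u | t. t \<ge> 0}"

definition vec_angle :: "real^2 \<Rightarrow> real^2 \<Rightarrow> real" where
  "vec_angle u v = arccos ((u \<bullet> v) / (norm u * norm v))"

text \<open>The closed wedge bounded by the rays from P in directions u and v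
  (for an angle less than pi this is the closed convex region between them).\<close>
definition wedge :: "real^2 \<Rightarrow> real^2 \<Rightarrow> real^2 \<Rightarrow> (real^2) set" where
  "wedge P u v = {P + a *\<^sub>R u + b *\<^sub>R v | a b. a \<ge> 0 \<and> b \<ge> 0}"

end

theory Submission imports Defs begin


definition LL :: "real \<Rightarrow> real^2 \<Rightarrow> real" where
  "LL \<phi> z = cos \<phi> * z$1 + sin \<phi> * z$2"
definition LD :: "real \<Rightarrow> real^2 \<Rightarrow> real" where
  "LD \<phi> z = - sin \<phi> * z$1 + cos \<phi> * z$2"
definition mm :: "(real^2) set \<Rightarrow> real \<Rightarrow> real" where
  "mm S \<phi> = Inf (LL \<phi> ` S)"

lemma LL_cont: "continuous_on S (LL \<phi>)"
  unfolding LL_def by (intro continuous_intros)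

lemma mm_le: assumes "compact S" "z \<in> S" shows "mm S \<phi> \<le> LL \<phi> z"
proof -
  have "compact (LL \<phi> ` S)" by (rule compact_continuous_image[OF LL_cont assms(1)])
  then have "bdd_below (LL \<phi> ` S)" by (meson bounded_imp_bdd_below compact_imp_bounded)
  then show ?thesis unfolding mm_def using assms(2) by (simp add: cInf_lower)
qed

lemma mm_att: assumes "compact S" "S \<noteq> {}" shows "\<exists>x\<in>S. LL \<phi> x = mm S \<phi>"
proof -
  obtain x where x: "x \<in> S" "\<forall>y\<in>S. LL \<phi> x \<le> LL \<phi> y"
    using continuous_attains_inf[OF assms LL_cont] by blast
  have "Inf (LL \<phi> ` S) = LL \<phi> x" by (rule cInf_eq_minimum) (use x in auto)
  then show ?thesis using x unfolding mm_def by auto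
qed

lemma mm_lip:
  assumes "compact S" "S \<noteq> {}" "\<forall>z\<in>S. \<bar>z$1\<bar> \<le> R \<and> \<bar>z$2\<bar> \<le> R"
  shows "mm S \<phi> \<le> mm S \<psi> + R * (\<bar>cos \<phi> - cos \<psi>\<bar> + \<bar>sin \<phi> - sin \<psi>\<bar>)"
proof -
  obtain q where q: "q \<in> S" "LL \<psi> q = mm S \<psi>" using mm_att[OF assms(1,2)] by blast
  have R: "\<bar>q$1\<bar> \<le> R" "\<bar>q$2\<bar> \<le> R" using assms(3) q by auto
  have "mm S \<phi> \<le> LL \<phi> q" by (rule mm_le[OF assms(1) q(1)])
  also have "\<dots> = LL \<psi> q + (cos \<phi> - cos \<psi>) * q$1 + (sin \<phi> - sin \<psi>) * q$2"
    unfolding LL_def by (simp add: algebra_simps)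
  also have "\<dots> \<le> mm S \<psi> + \<bar>cos \<phi> - cos \<psi>\<bar> * R + \<bar>sin \<phi> - sin \<psi>\<bar> * R"
  proof -
    have "(cos \<phi> - cos \<psi>) * q$1 \<le> \<bar>cos \<phi> - cos \<psi>\<bar> * R"
      by (rule order_trans[OF abs_ge_self]) (simp add: abs_mult mult_left_mono R(1))
    moreover have "(sin \<phi> - sin \<psi>) * q$2 \<le> \<bar>sin \<phi> - sin \<psi>\<bar> * R"
      by (rule order_trans[OF abs_ge_self]) (simp add: abs_mult mult_left_mono R(2))
    ultimately show ?thesis using q(2) by linarith
  qed
  finally show ?thesis by (simp add: algebra_simps)
qed

lemma mm_cont: assumes "compact S" "S \<noteq> {}" shows "continuous_on UNIV (mm S)"
proof -
  obtain R where R: "\<forall>z\<in>S. norm z \<le> R" using compact_imp_bounded[OF assms(1)]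
    by (auto simp: bounded_iff)
  have R2: "\<forall>z\<in>S. \<bar>z$1\<bar> \<le> R \<and> \<bar>z$2\<bar> \<le> R"
    using R component_le_norm_cart order_trans by blast
  show ?thesis unfolding continuous_on_eq_continuous_at[OF open_UNIV]
  proof (intro ballI)
    fix \<psi> :: real
    define g where "g \<phi> = R * (\<bar>cos \<phi> - cos \<psi>\<bar> + \<bar>sin \<phi> - sin \<psi>\<bar>)" for \<phi>
    have gc: "isCont g \<psi>" unfolding g_def by (intro continuous_intros)
    have "(g \<longlongrightarrow> 0) (at \<psi>)" using gc unfolding isCont_def g_def by simp
    then have lo: "((\<lambda>\<phi>. mm S \<psi> - g \<phi>) \<longlongrightarrow> mm S \<psi>) (at \<psi>)"
      and hi: "((\<lambda>\<phi>. mm S \<psi> + g \<phi>) \<longlongrightarrow> mm S \<psi>) (at \<psi>)"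
      by (auto intro: tendsto_eq_intros)
    have "((mm S) \<longlongrightarrow> mm S \<psi>) (at \<psi>)"
    proof (rule tendsto_sandwich[OF _ _ lo hi])
      show "\<forall>\<^sub>F \<phi> in at \<psi>. mm S \<psi> - g \<phi> \<le> mm S \<phi>"
      proof (rule always_eventually, intro allI)
        fix \<phi> show "mm S \<psi> - g \<phi> \<le> mm S \<phi>"
          using mm_lip[OF assms R2, of \<psi> \<phi>] by (simp add: g_def abs_minus_commute)
      qed
      show "\<forall>\<^sub>F \<phi> in at \<psi>. mm S \<phi> \<le> mm S \<psi> + g \<phi>"
        using mm_lip[OF assms R2] by (auto simp: g_def)
    qed
    then show "isCont (mm S) \<psi>" by (simp add: isCont_def)
  qed
qed


lemma key_min:
  assumes S: "compact S" "S \<noteq> {}" and g: "0 < \<gamma>" "\<gamma> < pi/2"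
  shows "\<exists>\<theta>. \<forall>p\<in>S. \<forall>q\<in>S. LL (\<theta>+\<gamma>) p = mm S (\<theta>+\<gamma>) \<longrightarrow> LL (\<theta>-\<gamma>) q = mm S (\<theta>-\<gamma>) \<longrightarrow>
     (LD (\<theta>+\<gamma>) p + LD (\<theta>-\<gamma>) q) * sin \<gamma> = (mm S (\<theta>+\<gamma>) - mm S (\<theta>-\<gamma>)) * cos \<gamma>"
proof -
  define m where "m = mm S"
  have mc: "continuous_on UNIV m" unfolding m_def by (rule mm_cont[OF S])
  have mcI: "continuous_on {a..b} m" for a b using mc continuous_on_subset by blast
  have mint: "m integrable_on {a..b}" for a b by (rule integrable_continuous_real[OF mcI])
  define F where "F x = integral {-10..x} m" for x
  have Fc: "continuous_on {-10..20} F" unfolding F_def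
    by (rule indefinite_integral_continuous_1[OF mint])
  have Fd: "(F has_real_derivative m y) (at y)" if "-10 < y" "y < 20" for y
    using integral_has_real_derivative[OF mcI, of y "-10" 20] that
    by (simp add: F_def[abs_def] at_within_Icc_at)
  have Fdiff: "F y - F x = integral {x..y} m" if "-10 \<le> x" "x \<le> y" for x y
    using Henstock_Kurzweil_Integration.integral_combine[OF that(1,2) mint[of "-10" y]] unfolding F_def by simp
  have mper: "m (x + 2*pi) = m x" for x unfolding m_def mm_def LL_def by simp
  have mshift: "m \<circ> (+) (2*pi) = m" using mper by (auto simp: add.commute)
  have Fper: "F (y + 2*pi) - F (x + 2*pi) = F y - F x" if "-10 \<le> x" "x \<le> y" for x y
  proof -
    have "F (y + 2*pi) - F (x + 2*pi) = integral {x+2*pi..y+2*pi} m"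
      using Fdiff[of "x+2*pi" "y+2*pi"] that pi_gt_zero by simp
    also have "\<dots> = integral {x..y} m"
      using integral_shift_Icc_real[of x y m "2*pi"] mshift by simp
    finally show ?thesis using Fdiff[OF that] by simp
  qed
  have cg: "0 < cos \<gamma>" using g by (intro cos_gt_zero) auto
  have sg: "0 < sin \<gamma>" using g by (intro sin_gt_zero) auto
  define \<Phi> where "\<Phi> \<theta> = (m (\<theta>+\<gamma>) + m (\<theta>-\<gamma>)) / (2 * cos \<gamma>) - (F (\<theta>+\<gamma>) - F (\<theta>-\<gamma>)) / (2 * sin \<gamma>)" for \<theta>
  have pi4: "pi < 4" "3 < pi" using pi_less_4 pi_gt3 by auto
  have Pc: "continuous_on {0..2*pi} \<Phi>"
  proof -
    have c1: "continuous_on {0..2*pi} (\<lambda>\<theta>. F (\<theta>+\<gamma>))"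
      by (rule continuous_on_compose2[OF Fc]) (use g pi4 in \<open>auto intro!: continuous_intros\<close>)
    have c2: "continuous_on {0..2*pi} (\<lambda>\<theta>. F (\<theta>-\<gamma>))"
      by (rule continuous_on_compose2[OF Fc]) (use g pi4 in \<open>auto intro!: continuous_intros\<close>)
    have c3: "continuous_on {0..2*pi} (\<lambda>\<theta>. m (\<theta>+\<gamma>))" "continuous_on {0..2*pi} (\<lambda>\<theta>. m (\<theta>-\<gamma>))"
      by (rule continuous_on_compose2[OF mc]; auto intro!: continuous_intros)+
    show ?thesis unfolding \<Phi>_def using cg sg
      by (intro continuous_intros c1 c2 c3) auto
  qed
  have Pper: "\<Phi> (\<theta> + 2*pi) = \<Phi> \<theta>" if "-2*pi \<le> \<theta>" "\<theta> \<le> 2*pi" for \<theta>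
  proof -
    have "F (\<theta> + 2*pi + \<gamma>) - F (\<theta> + 2*pi - \<gamma>) = F (\<theta>+\<gamma>) - F (\<theta>-\<gamma>)"
      using Fper[of "\<theta>-\<gamma>" "\<theta>+\<gamma>"] that g pi4 by (simp add: algebra_simps)
    moreover have "m (\<theta> + 2*pi + \<gamma>) = m (\<theta>+\<gamma>)" "m (\<theta> + 2*pi - \<gamma>) = m (\<theta>-\<gamma>)"
      using mper[of "\<theta>+\<gamma>"] mper[of "\<theta>-\<gamma>"] by (simp_all add: algebra_simps)
    ultimately show ?thesis unfolding \<Phi>_def by simp
  qed
  obtain \<theta>1 where t1: "\<theta>1 \<in> {0..2*pi}" "\<forall>\<theta>\<in>{0..2*pi}. \<Phi> \<theta>1 \<le> \<Phi> \<theta>"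
    using continuous_attains_inf[OF compact_Icc _ Pc] by auto
  have glob: "\<Phi> \<theta>1 \<le> \<Phi> y" if "\<bar>\<theta>1 - y\<bar> < 1" for y
  proof (cases "y < 0")
    case True
    then have "\<Phi> y = \<Phi> (y + 2*pi)" using Pper[of y] that t1(1) pi4 by auto
    also have "\<Phi> \<theta>1 \<le> \<dots>" using t1 True that pi4 by auto
    finally show ?thesis by simp
  next
    case False
    show ?thesis
    proof (cases "y > 2*pi")
      case True
      then have "\<Phi> y = \<Phi> (y - 2*pi)" using Pper[of "y - 2*pi"] that t1(1) pi4 by auto
      also have "\<Phi> \<theta>1 \<le> \<dots>" using t1 True that pi4 by auto
      finally show ?thesis by simp
    next
      case False2: False
      then show ?thesis using t1 False by auto
    qed
  qed
  show ?thesis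
  proof (intro exI[of _ \<theta>1] ballI impI)
    fix p q assume p: "p \<in> S" and q: "q \<in> S"
      and pm: "LL (\<theta>1+\<gamma>) p = mm S (\<theta>1+\<gamma>)" and qm: "LL (\<theta>1-\<gamma>) q = mm S (\<theta>1-\<gamma>)"
    define G where "G \<theta> = (LL (\<theta>+\<gamma>) p + LL (\<theta>-\<gamma>) q) / (2 * cos \<gamma>) - (F (\<theta>+\<gamma>) - F (\<theta>-\<gamma>)) / (2 * sin \<gamma>)" for \<theta>
    have PG: "\<Phi> \<theta> \<le> G \<theta>" for \<theta>
    proof -
      have "m (\<theta>+\<gamma>) + m (\<theta>-\<gamma>) \<le> LL (\<theta>+\<gamma>) p + LL (\<theta>-\<gamma>) q"
        using mm_le[OF S(1) p] mm_le[OF S(1) q] unfolding m_def by (intro add_mono)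
      then show ?thesis unfolding \<Phi>_def G_def using cg by (simp add: divide_right_mono)
    qed
    have PG1: "\<Phi> \<theta>1 = G \<theta>1" unfolding \<Phi>_def G_def m_def using pm qm by simp
    have dF1: "((\<lambda>\<theta>. F (\<theta>+\<gamma>)) has_real_derivative m (\<theta>1+\<gamma>)) (at \<theta>1)"
      using Fd[of "\<theta>1+\<gamma>"] t1(1) g pi4 DERIV_shift by auto
    have dF2: "((\<lambda>\<theta>. F (\<theta>+(-\<gamma>))) has_real_derivative m (\<theta>1-\<gamma>)) (at \<theta>1)"
      using Fd[of "\<theta>1-\<gamma>"] t1(1) g pi4 DERIV_shift[of F "m (\<theta>1-\<gamma>)" \<theta>1 "-\<gamma>"] by auto
    have dL1: "((\<lambda>\<theta>. LL (\<theta>+\<gamma>) p) has_real_derivative LD (\<theta>1+\<gamma>) p) (at \<theta>1)"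
      unfolding LL_def LD_def by (auto intro!: derivative_eq_intros)
    have dL2: "((\<lambda>\<theta>. LL (\<theta>-\<gamma>) q) has_real_derivative LD (\<theta>1-\<gamma>) q) (at \<theta>1)"
      unfolding LL_def LD_def by (auto intro!: derivative_eq_intros)
    have dG: "(G has_real_derivative
       (LD (\<theta>1+\<gamma>) p + LD (\<theta>1-\<gamma>) q) / (2 * cos \<gamma>) - (m (\<theta>1+\<gamma>) - m (\<theta>1-\<gamma>)) / (2 * sin \<gamma>)) (at \<theta>1)"
      unfolding G_def using dF2 cg sg
      by (auto intro!: derivative_eq_intros dL1 dL2 dF1) (simp add: field_simps)
    have "(LD (\<theta>1+\<gamma>) p + LD (\<theta>1-\<gamma>) q) / (2 * cos \<gamma>) - (m (\<theta>1+\<gamma>) - m (\<theta>1-\<gamma>)) / (2 * sin \<gamma>) = 0"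
    proof (rule DERIV_local_min[OF dG, of 1])
      show "\<forall>y. \<bar>\<theta>1 - y\<bar> < 1 \<longrightarrow> G \<theta>1 \<le> G y"
        using glob PG PG1 by (metis order_trans)
    qed simp
    then show "(LD (\<theta>1+\<gamma>) p + LD (\<theta>1-\<gamma>) q) * sin \<gamma> = (mm S (\<theta>1+\<gamma>) - mm S (\<theta>1-\<gamma>)) * cos \<gamma>"
      using cg sg unfolding m_def by (simp add: field_simps)
  qed
qed


lemma eq_alg:
  assumes "a = \<theta>+\<gamma>" "b = \<theta>-\<gamma>" and E: "(LD a X + LD b Y) * sin \<gamma> = (m1 - m2) * cos \<gamma>"
    and "LL a X = m1" "LL b Y = m2"
  shows "LL b X - m2 = LL a Y - m1"
proof -
  have b: "b = a - 2*\<gamma>" and a: "a = b + 2*\<gamma>" using assms(1,2) by auto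
  have e1: "LL b X = cos (2*\<gamma>) * LL a X - sin (2*\<gamma>) * LD a X"
    unfolding LL_def LD_def b by (simp add: cos_diff sin_diff algebra_simps)
  have e2: "LL a Y = cos (2*\<gamma>) * LL b Y + sin (2*\<gamma>) * LD b Y"
    unfolding LL_def LD_def a by (simp add: cos_add sin_add algebra_simps)
  have "sin (2*\<gamma>) * (LD a X + LD b Y) = 2 * cos \<gamma> * ((LD a X + LD b Y) * sin \<gamma>)"
    unfolding sin_double by (simp add: algebra_simps)
  also have "\<dots> = 2 * cos \<gamma> * cos \<gamma> * (m1 - m2)" using E by simp
  also have "\<dots> = (1 + cos (2*\<gamma>)) * (m1 - m2)" by (simp add: cos_double_cos power2_eq_square)
  finally have k: "sin (2*\<gamma>) * (LD a X + LD b Y) = (1 + cos (2*\<gamma>)) * (m1 - m2)" .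
  show ?thesis using e1 e2 k assms(4,5) by (simp add: algebra_simps)
qed

lemma LL_add: "LL \<phi> (x + y) = LL \<phi> x + LL \<phi> y" and LL_diff: "LL \<phi> (x - y) = LL \<phi> x - LL \<phi> y"
  and LL_scale: "LL \<phi> (c *\<^sub>R x) = c * LL \<phi> x"
  unfolding LL_def by (simp_all add: algebra_simps)

lemma hull_face:
  assumes lo: "\<forall>z\<in>S. c \<le> LL \<phi> z" and X: "X \<in> S" "LL \<phi> X = c" and un: "\<forall>z\<in>S. LL \<phi> z = c \<longrightarrow> z = X"
    and R: "X \<in> R" "\<forall>z\<in>R. LL \<phi> z = c"
  shows "R \<inter> convex hull S = {X}"
proof -
  define H where "H = {z. c < LL \<phi> z} \<union> {X}"
  have SH: "S \<subseteq> H" unfolding H_def using lo un by force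
  have cH: "convex H" unfolding convex_def
  proof (intro ballI allI impI)
    fix x y and \<mu> \<nu> :: real assume xy: "x \<in> H" "y \<in> H" and mn: "0 \<le> \<mu>" "0 \<le> \<nu>" "\<mu> + \<nu> = 1"
    show "\<mu> *\<^sub>R x + \<nu> *\<^sub>R y \<in> H"
    proof (cases "x = X \<and> y = X")
      case True
      then have "\<mu> *\<^sub>R x + \<nu> *\<^sub>R y = (\<mu> + \<nu>) *\<^sub>R X" by (simp add: scaleR_left_distrib)
      then show ?thesis using mn by (simp add: H_def)
    next
      case False
      show ?thesis
      proof (cases "\<mu> = 0")
        case True then show ?thesis using mn xy by simp
      next
        case mu: False
        show ?thesis
        proof (cases "\<nu> = 0")
          case True then show ?thesis using mn xy by simp
        next
          case nu: False
          have lx: "c \<le> LL \<phi> x" "c \<le> LL \<phi> y" using xy X(2) by (auto simp: H_def)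
          have strict: "c < LL \<phi> x \<or> c < LL \<phi> y" using False xy by (auto simp: H_def)
          have "\<mu> * c + \<nu> * c < \<mu> * LL \<phi> x + \<nu> * LL \<phi> y"
          proof (cases "c < LL \<phi> x")
            case True
            have "\<mu> * c < \<mu> * LL \<phi> x" using True mu mn by simp
            moreover have "\<nu> * c \<le> \<nu> * LL \<phi> y" using lx mn by (simp add: mult_left_mono)
            ultimately show ?thesis by linarith
          next
            case False
            then have T: "c < LL \<phi> y" using strict by auto
            have "\<nu> * c < \<nu> * LL \<phi> y" using T nu mn by simp
            moreover have "\<mu> * c \<le> \<mu> * LL \<phi> x" using lx mn by (simp add: mult_left_mono)
            ultimately show ?thesis by linarith
          qed
          moreover have "\<mu> * c + \<nu> * c = c" using mn(3) by (metis distrib_right mult_1)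
          ultimately have "c < LL \<phi> (\<mu> *\<^sub>R x + \<nu> *\<^sub>R y)"
            by (simp add: LL_add LL_scale)
          then show ?thesis by (simp add: H_def)
        qed
      qed
    qed
  qed
  have hH: "convex hull S \<subseteq> H" using hull_minimal[of S H convex] SH cH by blast
  show ?thesis
  proof
    show "R \<inter> convex hull S \<subseteq> {X}"
    proof
      fix z assume "z \<in> R \<inter> convex hull S"
      then have "LL \<phi> z = c" "z \<in> H" using R hH by auto
      then show "z \<in> {X}" by (auto simp: H_def)
    qed
    show "{X} \<subseteq> R \<inter> convex hull S" using R X by (auto intro: hull_inc)
  qed
qed

lemma inner2: "(x::real^2) \<bullet> y = x$1 * y$1 + x$2 * y$2"
  by (simp add: inner_vec_def sum_2)

lemma construct:
  fixes S :: "(real^2) set"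
  assumes al: "0 < \<alpha>" "\<alpha> < pi" and ab: "a - b = pi - \<alpha>" and XS: "X \<in> S" and YS: "Y \<in> S"
    and mX: "LL a X = ma" and mY: "LL b Y = mb" and lo1: "\<forall>z\<in>S. ma \<le> LL a z" and lo2: "\<forall>z\<in>S. mb \<le> LL b z"
    and u1: "\<forall>z\<in>S. LL a z = ma \<longrightarrow> z = X" and u2: "\<forall>z\<in>S. LL b z = mb \<longrightarrow> z = Y"
    and E: "LL b X - mb = LL a Y - ma"
  shows "\<exists>P u v X Y. u \<noteq> 0 \<and> v \<noteq> 0 \<and> vec_angle u v = \<alpha> \<and>
           S \<subseteq> wedge P u v \<and>
           ray P u \<inter> convex hull S = {X} \<and>
           ray P v \<inter> convex hull S = {Y} \<and>
           X \<in> S \<and> Y \<in> S \<and> dist P X = dist P Y"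
proof -
  define \<sigma> where "\<sigma> = sin a * cos b - cos a * sin b"
  have "\<sigma> = sin (a - b)" by (simp add: \<sigma>_def sin_diff)
  then have sig: "\<sigma> = sin \<alpha>" using ab by simp
  have sp: "0 < \<sigma>" using sig al by (simp add: sin_gt_zero)
  have cab: "cos a * cos b + sin a * sin b = - cos \<alpha>"
    using ab cos_diff[of a b] by simp
  define u :: "real^2" where "u = vector [sin a, - cos a]"
  define v :: "real^2" where "v = vector [- sin b, cos b]"
  have zero: "w = 0" if "LL a w = 0" "LL b w = 0" for w :: "real^2"
  proof -
    have "\<sigma> * w$1 = LL b w * sin a - LL a w * sin b" "\<sigma> * w$2 = LL a w * cos b - LL b w * cos a"
      unfolding LL_def \<sigma>_def by (simp_all add: algebra_simps)
    then have "w$1 = 0" "w$2 = 0" using that sp by auto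
    then show ?thesis by (simp add: vec_eq_iff forall_2)
  qed
  have Lau: "LL a u = 0" and Lbv: "LL b v = 0" and Lbu: "LL b u = \<sigma>" and Lav: "LL a v = \<sigma>"
    unfolding LL_def u_def v_def \<sigma>_def by (simp_all add: algebra_simps)
  have nu: "norm u = 1" "norm v = 1"
  proof -
    have "u \<bullet> u = 1" "v \<bullet> v = 1" unfolding inner2 u_def v_def
      using sin_cos_squared_add3[of a] sin_cos_squared_add3[of b] by (simp_all add: algebra_simps)
    then show "norm u = 1" "norm v = 1" by (simp_all add: norm_eq_sqrt_inner)
  qed
  define t0 where "t0 = (LL b X - mb) / \<sigma>"
  have t0: "0 \<le> t0" unfolding t0_def using lo2 XS sp by simp
  have t0s: "t0 * \<sigma> = LL b X - mb" unfolding t0_def using sp by simp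
  define P where "P = X - t0 *\<^sub>R u"
  have LaP: "LL a P = ma" unfolding P_def using mX Lau by (simp add: LL_diff LL_scale)
  have LbP: "LL b P = mb" unfolding P_def using t0s Lbu by (simp add: LL_diff LL_scale)
  have Xr: "X = P + t0 *\<^sub>R u" unfolding P_def by simp
  have Yr: "Y = P + t0 *\<^sub>R v"
  proof -
    have "Y - (P + t0 *\<^sub>R v) = 0"
      by (rule zero) (use LaP LbP Lav Lbv mY E t0s in \<open>simp_all add: LL_diff LL_add LL_scale\<close>)
    then show ?thesis by simp
  qed
  show ?thesis
  proof (intro exI conjI)
    show "u \<noteq> 0" "v \<noteq> 0" using nu by auto
    have "u \<bullet> v = - (cos a * cos b + sin a * sin b)" unfolding inner2 u_def v_def by simp
    then have "u \<bullet> v = cos \<alpha>" using cab by simp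
    then show "vec_angle u v = \<alpha>" unfolding vec_angle_def using nu al by (simp add: arccos_cos)
    show "S \<subseteq> wedge P u v"
    proof
      fix z assume zS: "z \<in> S"
      define A where "A = (LL b z - mb) / \<sigma>"
      define B where "B = (LL a z - ma) / \<sigma>"
      have AB: "0 \<le> A" "0 \<le> B" unfolding A_def B_def using lo1 lo2 zS sp by auto
      have As: "A * \<sigma> = LL b z - mb" "B * \<sigma> = LL a z - ma" unfolding A_def B_def using sp by auto
      have "z - (P + A *\<^sub>R u + B *\<^sub>R v) = 0"
        by (rule zero) (use LaP LbP Lav Lbv Lau Lbu As in \<open>simp_all add: LL_diff LL_add LL_scale\<close>)
      then have "z = P + A *\<^sub>R u + B *\<^sub>R v" by simp
      then show "z \<in> wedge P u v" unfolding wedge_def using AB by blast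
    qed
    show "ray P u \<inter> convex hull S = {X}"
    proof (rule hull_face[where \<phi> = a and c = ma])
      show "X \<in> ray P u" unfolding ray_def using Xr t0 by blast
      show "\<forall>z\<in>ray P u. LL a z = ma" unfolding ray_def using LaP Lau by (auto simp: LL_add LL_scale)
    qed (rule lo1 XS mX u1)+
    show "ray P v \<inter> convex hull S = {Y}"
    proof (rule hull_face[where \<phi> = b and c = mb])
      show "Y \<in> ray P v" unfolding ray_def using Yr t0 by blast
      show "\<forall>z\<in>ray P v. LL b z = mb" unfolding ray_def using LbP Lbv by (auto simp: LL_add LL_scale)
    qed (rule lo2 YS mY u2)+
    show "X \<in> S" "Y \<in> S" by fact+
    show "dist P X = dist P Y"
      using Xr Yr nu t0 by (simp add: dist_norm)
  qed
qed

theorem mainTheorem4: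
  fixes S :: "(real^2) set" and \<alpha> :: real
  assumes "compact S" and "S \<noteq> {}" and "0 < \<alpha>" and "\<alpha> < pi"
  shows "\<exists>P u v X Y. u \<noteq> 0 \<and> v \<noteq> 0 \<and> vec_angle u v = \<alpha> \<and>
           S \<subseteq> wedge P u v \<and>
           ray P u \<inter> convex hull S = {X} \<and>
           ray P v \<inter> convex hull S = {Y} \<and>
           X \<in> S \<and> Y \<in> S \<and> dist P X = dist P Y"
proof -
  define \<gamma> where "\<gamma> = (pi - \<alpha>) / 2"
  have g: "0 < \<gamma>" "\<gamma> < pi/2" using assms(3,4) by (auto simp: \<gamma>_def)
  obtain \<theta> where th: "\<forall>p\<in>S. \<forall>q\<in>S. LL (\<theta>+\<gamma>) p = mm S (\<theta>+\<gamma>) \<longrightarrow> LL (\<theta>-\<gamma>) q = mm S (\<theta>-\<gamma>) \<longrightarrow>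
     (LD (\<theta>+\<gamma>) p + LD (\<theta>-\<gamma>) q) * sin \<gamma> = (mm S (\<theta>+\<gamma>) - mm S (\<theta>-\<gamma>)) * cos \<gamma>"
    using key_min[OF assms(1,2) g] by blast
  define a where "a = \<theta>+\<gamma>"
  define b where "b = \<theta>-\<gamma>"
  obtain X where X: "X \<in> S" "LL a X = mm S a" using mm_att[OF assms(1,2)] by blast
  obtain Y where Y: "Y \<in> S" "LL b Y = mm S b" using mm_att[OF assms(1,2)] by blast
  have cs1: "cos \<phi> * (cos \<phi> * x) + sin \<phi> * (sin \<phi> * x) = (x::real)" for \<phi> x
    by (simp only: mult.assoc[symmetric] distrib_right[symmetric]) simp
  have rec: "p$1 = cos \<phi> * LL \<phi> p - sin \<phi> * LD \<phi> p" "p$2 = sin \<phi> * LL \<phi> p + cos \<phi> * LD \<phi> p" for \<phi> p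
    unfolding LL_def LD_def by (simp_all add: algebra_simps cs1)
  have inj: "p = q" if "LL \<phi> p = LL \<phi> q" "LD \<phi> p = LD \<phi> q" for \<phi> p q
    using that rec[where \<phi>=\<phi> and p=p] rec[where \<phi>=\<phi> and p=q] by (simp add: vec_eq_iff forall_2)
  have sgz: "sin \<gamma> \<noteq> 0" using g sin_gt_zero[of \<gamma>] by auto
  have E0: "(LD a X + LD b Y) * sin \<gamma> = (mm S a - mm S b) * cos \<gamma>"
    using th X Y unfolding a_def b_def by blast
  show ?thesis
  proof (rule construct[where a = a and b = b and X = X and Y = Y and ma = "mm S a" and mb = "mm S b"])
    show "a - b = pi - \<alpha>" unfolding a_def b_def \<gamma>_def by simp
    show "\<forall>z\<in>S. mm S a \<le> LL a z" "\<forall>z\<in>S. mm S b \<le> LL b z" using mm_le[OF assms(1)] by auto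
    show "\<forall>z\<in>S. LL a z = mm S a \<longrightarrow> z = X"
    proof (intro ballI impI)
      fix z assume z: "z \<in> S" "LL a z = mm S a"
      have "(LD a z + LD b Y) * sin \<gamma> = (mm S a - mm S b) * cos \<gamma>"
        using th z Y unfolding a_def b_def by blast
      then have "(LD a z + LD b Y) * sin \<gamma> = (LD a X + LD b Y) * sin \<gamma>" using E0 by simp
      then have "LD a z = LD a X" using sgz by simp
      then show "z = X" using inj[where \<phi>=a and p=z and q=X] z(2) X(2) by simp
    qed
    show "\<forall>z\<in>S. LL b z = mm S b \<longrightarrow> z = Y"
    proof (intro ballI impI)
      fix z assume z: "z \<in> S" "LL b z = mm S b"
      have "(LD a X + LD b z) * sin \<gamma> = (mm S a - mm S b) * cos \<gamma>"
        using th z X unfolding a_def b_def by blast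
      then have "(LD a X + LD b z) * sin \<gamma> = (LD a X + LD b Y) * sin \<gamma>" using E0 by simp
      then have "LD b z = LD b Y" using sgz by simp
      then show "z = Y" using inj[where \<phi>=b and p=z and q=Y] z(2) Y(2) by simp
    qed
    show "LL b X - mm S b = LL a Y - mm S a"
      by (rule eq_alg[OF a_def b_def E0 X(2) Y(2)])
  qed (simp_all add: assms X Y)
qed

end
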